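(* Let $\Phi_1,\Phi_2\in\mathrm{SL}(2,\mathbb C)$ be the monodromy matrices defined below. (a) $\Phi_1$ and $\Phi_2$ have the forms $$\Phi_1=\begin{pmatrix}r_1&p\\ -\bar p&r_2\end{pmatrix},\qquad \Phi_2=\begin{pmatrix}q&ir_3\\ ir_4&\bar q\end{pmatrix}$$ with $p,q\in\mathbb C$ and $r_1,r_2,r_3,r_4\in\mathbb R$. (b) Assume $p\neq0$, $q\neq0$, $r_1\neq r_2$ and $r_3\neq r_4$. Put $$h_1=\frac{2\,\Re(p)}{r_2-r_1},\qquad h_2=\frac{2\,\Im(q)}{r_4-r_3}.$$ - There exist real $\alpha,\beta$ with $\alpha^2-\beta^2=1$ such that, for $S=\begin{pmatrix}\alpha&\beta\\ \beta&\alpha\end{pmatrix}$, both matrices $S^{-1}\Phi_1S$ and $S^{-1}\Phi_2S$ lie in $\mathrm{SU}(2)$, if and only if $h_1=h_2$ and $|h_1|>1$. In that case $\alpha,\beta$ are determined by $\frac{\alpha^2+\beta^2}{2\alpha\beta}=h_1$. - There exist real $\alpha,\beta$ with $-2\alpha\beta=1$ such that, for $S=\begin{pmatrix}\alpha&\beta\\ \alpha&-\beta\end{pmatrix}$, both matrices $S^{-1}\Phi_1S$ and $S^{-1}\Phi_2S$ lie in $\mathrm{SU}(1,1)$, if and only if $h_1=h_2$ and $|h_1|<1$. In that case $\alpha,\beta$ are determined by $\frac{\alpha^2-\beta^2}{\alpha^2+\beta^2}=h_1$. In particular, the closing conditions along $\gamma_1,\gamma_2$ for $f_H$ or $f_S$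 reduce to the single condition $h_1=h_2\in\mathbb R\setminus\{\pm1\}$. Then $|h_1|>1$ gives a surface in $H^3$, and $|h_1|<1$ gives a surface in $S^3_1$.
   Context: Fix an integer $k\ge1$, a real number $\lambda>1$ and a real number $c\ne0$. Let $$\overline M=\Big\{(z,w)\in(\mathbb C\cup\{\infty\})^2 : w^{k+1}=z\Big(\frac{z-\lambda^{-1}}{\lambda-z}\Big)^k\Big\},$$ a compact Riemann surface of genus $k$. Let $M=\overline M\setminus\{(0,0),(\infty,\infty)\}$, with universal cover $\widetilde M$. Set $G=\lambda^{k/(k+1)}w$, $\Omega=c\,\frac{dz}{zw}$, $w_0=\lambda^{-k/(k+1)}$ and $\Lambda=e^{2\pi i/(k+1)}$. Let $\kappa_1(z,w)=(\bar z,\bar w)$, $\kappa_2(z,w)=\big(1/z,\ \lambda^{-2k/(k+1)}/w\big)$ and $\kappa_3(z,w)=(\bar z,\Lambda\bar w)$. Paths and loops in $M$: - $c_1$ goes from $(1,w_0)$ through $\{\Im z<0\}$, with embedded $z$-projection, to a point with real $z\in(0,\lambda^{-1})$. - $c_2$ goes from $(1,w_0)$ through $\{\Im z<0\}$, with embedded $z$-projection, to a point with real $z<0$. - $\gamma_1$ is the concatenation $c_1$, then $\kappa_3\circ c_1^{-1}$, then $\kappa_2\circ\kappa_1\circ\kappa_3\circ c_1$, then $\kappa_1\circ\kappa_2\circ c_1^{-1}$. It is a loop at $(1,w_0)$ whose $z$-projection winds once around $[\lambda^{-1},\lambda]$. - $\gamma_2$ is the concatenation $c_2$, then $\kappa_1\circ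 c_2^{-1}$. It is a loop at $(1,w_0)$ whose $z$-projection winds once around $0$. Let $F:\widetilde M\to\mathrm{SL}(2,\mathbb C)$ solve $$dF\,F^{-1}=\begin{pmatrix}G&-G^2\\ 1&-G\end{pmatrix}\Omega$$ with $F=\mathrm{id}$ at a lift of $(1,w_0)$. Let $\tau_j$ be the deck transformation of $\widetilde M$ corresponding to $\gamma_j$. With $\begin{pmatrix}A_j&B_j\\ C_j&D_j\end{pmatrix}$ the value of $F$ continued along $c_j$ to $c_j(1)$, define $\Phi_1,\Phi_2$ by $F\circ\tau_j=F\Phi_j$. Explicitly, $$\Phi_1=\begin{pmatrix}\bar A_1&-\bar C_1\\ -\bar B_1&\bar D_1\end{pmatrix}\begin{pmatrix}D_1&\Lambda C_1\\ \Lambda^{-1}B_1&A_1\end{pmatrix}\begin{pmatrix}\bar D_1&-\Lambda\bar B_1\\ -\Lambda^{-1}\bar C_1&\bar A_1\end{pmatrix}\begin{pmatrix}A_1&B_1\\ C_1&D_1\end{pmatrix},$$ $$\Phi_2=\begin{pmatrix}\bar D_2&-\bar B_2\\ -\bar C_2&\bar A_2\end{pmatrix}\begin{pmatrix}A_2&B_2\\ C_2&D_2\end{pmatrix}.$$ If the initial condition is replaced by $F=S$ at the base point, the monodromies along $\gamma_j$ become $S^{-1}\Phi_jS$. Surfaces: $H^3=\{aa^*\}$ and $S^3_1=\{a e_3 a^*\}$ for $a\in\mathrm{SL}(2,\mathbb C)$, where $a^*=\bar a^{t}$ and $e_3=\mathrm{diag}(1,-1)$. Put $f_H=FF^*$ (a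 constant mean curvature $1$ immersion into $H^3$) and $f_S=Fe_3F^*$ (a constant mean curvature $1$ face into $S^3_1$). $\mathrm{SU}(1,1)=\{X\in\mathrm{SL}(2,\mathbb C): Xe_3X^*=e_3\}$. *)

theory Defs
  imports "HOL-Analysis.Analysis"
begin

definition mat2 :: "complex \<Rightarrow> complex \<Rightarrow> complex \<Rightarrow> complex \<Rightarrow> complex^2^2" where
  "mat2 a b c d = (\<chi> i j. if i = 1 then (if j = 1 then a else b) else (if j = 1 then c else d))"

definition cadj :: "complex^2^2 \<Rightarrow> complex^2^2" where
  "cadj X = (\<chi> i j. cnj (X $ j $ i))"

definition e3 :: "complex^2^2" where
  "e3 = mat2 1 0 0 (-1)"

definition SL2 :: "(complex^2^2) set" where
  "SL2 = {X. det X = 1}"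

definition SU2 :: "(complex^2^2) set" where
  "SU2 = {X. X \<in> SL2 \<and> X ** cadj X = mat 1}"

definition SU11 :: "(complex^2^2) set" where
  "SU11 = {X. X \<in> SL2 \<and> X ** e3 ** cadj X = e3}"

definition Lam :: "nat \<Rightarrow> complex" where
  "Lam k = cis (2 * pi / real (k + 1))"

text \<open>The monodromy matrices, as explicit functions of the value
  \<open>(A B; C D)\<close> of F continued along \<open>c_j\<close>.\<close>
definition Phi1 :: "nat \<Rightarrow> complex \<Rightarrow> complex \<Rightarrow> complex \<Rightarrow> complex \<Rightarrow> complex^2^2" where
  "Phi1 k A B C D =
     mat2 (cnj A) (- cnj C) (- cnj B) (cnj D)
     ** mat2 D (Lam k * C) (inverse (Lam k) * B) A
     ** mat2 (cnj D) (- Lam k * cnj B) (- inverse (Lam k) * cnj C) (cnj A)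
     ** mat2 A B C D"

definition Phi2 :: "complex \<Rightarrow> complex \<Rightarrow> complex \<Rightarrow> complex \<Rightarrow> complex^2^2" where
  "Phi2 A B C D = mat2 (cnj D) (- cnj B) (- cnj C) (cnj A) ** mat2 A B C D"

definition conjm :: "complex^2^2 \<Rightarrow> complex^2^2 \<Rightarrow> complex^2^2" where
  "conjm S X = matrix_inv S ** X ** S"

end

theory Submission
  imports Defs
begin


lemma mat2_nth[simp]:
  "mat2 a b c d $ 1 $ 1 = a" "mat2 a b c d $ 1 $ 2 = b"
  "mat2 a b c d $ 2 $ 1 = c" "mat2 a b c d $ 2 $ 2 = d"
  by (simp_all add: mat2_def)

lemma mat2_eta: "X = mat2 (X$1$1) (X$1$2) (X$2$1) (X$2$2)"
  by (simp add: vec_eq_iff forall_2)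

lemma mat2_eq_iff: "mat2 a b c d = mat2 a' b' c' d' \<longleftrightarrow> a = a' \<and> b = b' \<and> c = c' \<and> d = d'"
  by (auto simp add: vec_eq_iff forall_2)

lemma mat2_mult: "mat2 a b c d ** mat2 e f g h = mat2 (a*e+b*g) (a*f+b*h) (c*e+d*g) (c*f+d*h)"
  by (simp add: vec_eq_iff forall_2 matrix_matrix_mult_def sum_2)

lemma mat2_cadj: "cadj (mat2 a b c d) = mat2 (cnj a) (cnj c) (cnj b) (cnj d)"
  by (simp add: vec_eq_iff forall_2 cadj_def)

lemma mat2_det: "det (mat2 a b c d) = a*d - b*c"
  by (simp add: det_2)

lemma mat2_one: "mat 1 = mat2 1 0 0 1"
  by (simp add: vec_eq_iff forall_2 mat_def)

lemma cadj_mult: "cadj (A ** B) = cadj B ** cadj (A::complex^2^2)"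
  by (simp add: cadj_def vec_eq_iff matrix_matrix_mult_def cnj_sum mult.commute)

lemma cadj_cadj: "cadj (cadj (A::complex^2^2)) = A"
  by (simp add: cadj_def vec_eq_iff)

lemma cadj_one: "cadj (mat 1 :: complex^2^2) = mat 1"
  by (simp add: mat2_one mat2_cadj)

lemma det_cadj: "det (cadj (A::complex^2^2)) = cnj (det A)"
  apply (subst (1 2) mat2_eta[of A]) by (simp add: mat2_cadj mat2_det)

lemma inv_props: assumes "det (S::complex^2^2) \<noteq> 0"
  shows "S ** matrix_inv S = mat 1" "matrix_inv S ** S = mat 1"
proof -
  have "invertible S" using assms invertible_det_nz by blast
  then have "\<exists>A'. S ** A' = mat 1 \<and> A' ** S = mat 1" unfolding invertible_def by blast
  from someI_ex[OF this] show "S ** matrix_inv S = mat 1" "matrix_inv S ** S = mat 1"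
    unfolding matrix_inv_def by auto
qed

lemma sandwich: assumes "det (S::complex^2^2) \<noteq> 0"
  shows "S ** (matrix_inv S ** X ** cadj (matrix_inv S)) ** cadj S = X"
    "matrix_inv S ** (S ** X ** cadj S) ** cadj (matrix_inv S) = X"
proof -
  note i = inv_props[OF assms]
  have c1: "cadj (matrix_inv S) ** cadj S = mat 1"
    by (metis cadj_mult cadj_one i(1))
  have c2: "cadj S ** cadj (matrix_inv S) = mat 1"
    by (metis cadj_mult cadj_one i(2))
  have "S ** (matrix_inv S ** X ** cadj (matrix_inv S)) ** cadj S
      = (S ** matrix_inv S) ** X ** (cadj (matrix_inv S) ** cadj S)"
    by (simp add: matrix_mul_assoc)
  then show "S ** (matrix_inv S ** X ** cadj (matrix_inv S)) ** cadj S = X"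
    using i c1 by simp
  have "matrix_inv S ** (S ** X ** cadj S) ** cadj (matrix_inv S)
      = (matrix_inv S ** S) ** X ** (cadj S ** cadj (matrix_inv S))"
    by (simp add: matrix_mul_assoc)
  then show "matrix_inv S ** (S ** X ** cadj S) ** cadj (matrix_inv S) = X"
    using i c2 by simp
qed

lemma conj_equiv: assumes "det (S::complex^2^2) \<noteq> 0"
  shows "(conjm S P ** E ** cadj (conjm S P) = E) \<longleftrightarrow>
         (P ** (S ** E ** cadj S) ** cadj P = S ** E ** cadj S)"
proof -
  define Si where "Si = matrix_inv S"
  have U: "conjm S P ** E ** cadj (conjm S P) = Si ** (P ** (S ** E ** cadj S) ** cadj P) ** cadj Si"
    by (simp add: conjm_def cadj_mult Si_def matrix_mul_assoc)
  have E: "E = Si ** (S ** E ** cadj S) ** cadj Si" using sandwich(2)[OF assms] Si_def by simp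
  show ?thesis
  proof
    assume h: "conjm S P ** E ** cadj (conjm S P) = E"
    have "P ** (S ** E ** cadj S) ** cadj P = S ** (Si ** (P ** (S ** E ** cadj S) ** cadj P) ** cadj Si) ** cadj S"
      using sandwich(1)[OF assms] Si_def by simp
    also have "\<dots> = S ** E ** cadj S" using h U by simp
    finally show "P ** (S ** E ** cadj S) ** cadj P = S ** E ** cadj S" .
  next
    assume h: "P ** (S ** E ** cadj S) ** cadj P = S ** E ** cadj S"
    show "conjm S P ** E ** cadj (conjm S P) = E" using U h E by simp
  qed
qed

lemma det_conjm: assumes "det (S::complex^2^2) \<noteq> 0" shows "det (conjm S P) = det P"
proof -
  have "det (matrix_inv S) * det S = 1" using inv_props(2)[OF assms] det_mul
    by (metis det_I)
  then show ?thesis unfolding conjm_def det_mul by (metis mult.commute mult.left_commute mult_1_right)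
qed

lemma lin_equiv: assumes "cadj P ** Q = mat 1" "Q ** cadj P = mat 1"
  shows "(P ** G ** cadj P = G) \<longleftrightarrow> (P ** G = G ** (Q::complex^2^2))"
proof
  assume h: "P ** G ** cadj P = G"
  have "P ** G = P ** G ** (cadj P ** Q)" using assms by simp
  also have "\<dots> = (P ** G ** cadj P) ** Q" by (simp add: matrix_mul_assoc)
  finally show "P ** G = G ** Q" using h by simp
next
  assume h: "P ** G = G ** Q"
  have "P ** G ** cadj P = G ** (Q ** cadj P)" using h by (simp add: matrix_mul_assoc)
  then show "P ** G ** cadj P = G" using assms by simp
qed




lemma key:
  fixes r1 r2 r3 r4 x z :: real and p q g :: complex
  assumes "p \<noteq> 0" "r3 \<noteq> r4"
  shows "(mat2 (of_real r1) p (-cnj p) (of_real r2) ** mat2 (of_real x) g (cnj g) (of_real z)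
            = mat2 (of_real x) g (cnj g) (of_real z) ** mat2 (of_real r2) p (-cnj p) (of_real r1) \<and>
          mat2 q (\<i> * of_real r3) (\<i> * of_real r4) (cnj q) ** mat2 (of_real x) g (cnj g) (of_real z)
            = mat2 (of_real x) g (cnj g) (of_real z) ** mat2 q (\<i> * of_real r4) (\<i> * of_real r3) (cnj q))
     \<longleftrightarrow> (z = x \<and> Im g = 0 \<and> x*(r2-r1) = 2*Re g*Re p \<and> x*(r4-r3) = 2*Re g*Im q)"
proof -
  have pn: "Re p \<noteq> 0 \<or> Im p \<noteq> 0" using assms(1) complex_eq_iff by auto
  show ?thesis
    unfolding mat2_mult mat2_eq_iff complex_eq_iff
    apply (simp add: algebra_simps)
    using pn assms(2)
    apply auto
    done
qed




lemma Lam_cnj: "cnj (Lam k) = inverse (Lam k)" "cnj (inverse (Lam k)) = Lam k" "Lam k \<noteq> 0"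
  by (simp_all add: Lam_def cis_cnj)

lemma e3_sq: "e3 ** e3 = mat 1" by (simp add: e3_def mat2_mult mat2_one)
lemma e3_cadj: "cadj e3 = e3" by (simp add: e3_def mat2_cadj)

lemma Phi1_fact: "Phi1 k A B C D =
   (e3 ** cadj (mat2 A B C D) ** e3) ** mat2 D (Lam k * C) (inverse (Lam k) * B) A
   ** (e3 ** cadj (mat2 D (Lam k * C) (inverse (Lam k) * B) A) ** e3) ** mat2 A B C D"
  unfolding Phi1_def by (simp add: e3_def mat2_cadj mat2_mult Lam_cnj)

lemma Phi1_herm: "cadj (e3 ** Phi1 k A B C D) = e3 ** Phi1 k A B C D"
proof -
  define M where "M = mat2 A B C D"
  define X where "X = mat2 D (Lam k * C) (inverse (Lam k) * B) A"
  have "e3 ** Phi1 k A B C D = cadj M ** (e3 ** X ** e3 ** cadj X ** e3) ** M"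
    unfolding Phi1_fact M_def[symmetric] X_def[symmetric]
    by (simp add: matrix_mul_assoc e3_sq)
  moreover have "cadj (cadj M ** (e3 ** X ** e3 ** cadj X ** e3) ** M) = cadj M ** (e3 ** X ** e3 ** cadj X ** e3) ** M"
    by (simp add: cadj_mult cadj_cadj e3_cadj matrix_mul_assoc)
  ultimately show ?thesis by simp
qed

lemma Phi1_form: "\<exists>p r1 r2. Phi1 k A B C D = mat2 (of_real r1) p (- cnj p) (of_real r2)"
proof -
  define P where "P = Phi1 k A B C D"
  have h: "cadj (e3 ** P) = e3 ** P" using Phi1_herm P_def by simp
  have "P = mat2 (P$1$1) (P$1$2) (P$2$1) (P$2$2)" by (rule mat2_eta)
  then have h2: "cadj (e3 ** mat2 (P$1$1) (P$1$2) (P$2$1) (P$2$2)) = e3 ** mat2 (P$1$1) (P$1$2) (P$2$1) (P$2$2)"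
    using h by simp
  then have c: "cnj (P$1$1) = P$1$1" "P$2$1 = - cnj (P$1$2)" "cnj (P$2$2) = P$2$2"
    by (auto simp add: e3_def mat2_mult mat2_cadj mat2_eq_iff)
  have "P = mat2 (of_real (Re (P$1$1))) (P$1$2) (- cnj (P$1$2)) (of_real (Re (P$2$2)))"
    apply (subst mat2_eta) using c by (simp add: mat2_eq_iff complex_eq_iff)
  then show ?thesis unfolding P_def by blast
qed

lemma Phi2_form: "\<exists>q r3 r4. Phi2 A B C D = mat2 q (\<i> * of_real r3) (\<i> * of_real r4) (cnj q)"
proof -
  have "Phi2 A B C D = mat2 (cnj D * A - cnj B * C) (\<i> * of_real (- 2 * Im (cnj B * D)))
      (\<i> * of_real (2 * Im (cnj A * C))) (cnj (cnj D * A - cnj B * C))"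
    unfolding Phi2_def by (simp add: mat2_mult mat2_eq_iff complex_eq_iff algebra_simps)
  then show ?thesis by blast
qed

lemma det_Phi1: assumes "A*D - B*C = 1" shows "det (Phi1 k A B C D) = 1"
proof -
  have l: "Lam k * inverse (Lam k) = 1" using Lam_cnj(3) by simp
  have "cnj (A*D - B*C) = 1" using assms by simp
  then have "cnj A * cnj D - cnj B * cnj C = 1" by simp
  then show ?thesis unfolding Phi1_def det_mul mat2_det
    using assms l by (simp add: algebra_simps)
qed

lemma det_Phi2: assumes "A*D - B*C = 1" shows "det (Phi2 A B C D) = 1"
proof -
  have "cnj (A*D - B*C) = 1" using assms by simp
  then have "cnj A * cnj D - cnj B * cnj C = 1" by simp
  then show ?thesis unfolding Phi2_def det_mul mat2_det
    using assms by (simp add: algebra_simps)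
qed




lemma herm_form: assumes "cadj G = (G::complex^2^2)"
  shows "G = mat2 (of_real (Re (G$1$1))) (G$1$2) (cnj (G$1$2)) (of_real (Re (G$2$2)))"
proof -
  have "cadj (mat2 (G$1$1) (G$1$2) (G$2$1) (G$2$2)) = mat2 (G$1$1) (G$1$2) (G$2$1) (G$2$2)"
    using assms mat2_eta[of G] by simp
  then have c: "cnj (G$1$1) = G$1$1" "G$2$1 = cnj (G$1$2)" "cnj (G$2$2) = G$2$2"
    by (auto simp add: mat2_cadj mat2_eq_iff)
  show ?thesis apply (subst mat2_eta) using c by (simp add: mat2_eq_iff complex_eq_iff)
qed

lemma reduce:
  fixes r1 r2 r3 r4 :: real and p q :: complex
  assumes S: "det S = 1" and E: "cadj E = E"
    and P1: "P1 = mat2 (of_real r1) p (- cnj p) (of_real r2)"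
    and P2: "P2 = mat2 q (\<i> * of_real r3) (\<i> * of_real r4) (cnj q)"
    and d1: "det P1 = 1" and d2: "det P2 = 1"
    and pn: "p \<noteq> 0" and r34: "r3 \<noteq> r4"
  shows "(conjm S P1 ** E ** cadj (conjm S P1) = E \<and> conjm S P2 ** E ** cadj (conjm S P2) = E)
    \<longleftrightarrow> (\<exists>x y::real. S ** E ** cadj S = mat2 (of_real x) (of_real y) (of_real y) (of_real x)
          \<and> x*(r2-r1) = 2*y*Re p \<and> x*(r4-r3) = 2*y*Im q)"
proof -
  define G where "G = S ** E ** cadj S"
  define Q1 where "Q1 = mat2 (of_real r2) p (- cnj p) (of_real r1)"
  define Q2 where "Q2 = mat2 q (\<i> * of_real r4) (\<i> * of_real r3) (cnj q)"
  have S0: "det S \<noteq> 0" using S by simp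
  have dd1: "of_real r1 * of_real r2 + p * cnj p = (1::complex)" using d1 unfolding P1 mat2_det by simp
  have dd2: "q * cnj q + of_real r3 * of_real r4 = (1::complex)" using d2 unfolding P2 mat2_det
    by (simp add: algebra_simps)
  have q1: "cadj P1 ** Q1 = mat 1" "Q1 ** cadj P1 = mat 1"
    unfolding P1 Q1_def mat2_cadj mat2_mult mat2_one mat2_eq_iff using dd1
    by (simp_all add: algebra_simps)
  have q2: "cadj P2 ** Q2 = mat 1" "Q2 ** cadj P2 = mat 1"
    unfolding P2 Q2_def mat2_cadj mat2_mult mat2_one mat2_eq_iff using dd2
    by (simp_all add: algebra_simps)
  have hG: "cadj G = G" unfolding G_def by (simp add: cadj_mult cadj_cadj E matrix_mul_assoc)
  define x where "x = Re (G$1$1)"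
  define g where "g = G$1$2"
  define z where "z = Re (G$2$2)"
  have Gf: "G = mat2 (of_real x) g (cnj g) (of_real z)"
    unfolding x_def g_def z_def by (rule herm_form[OF hG])
  have "(conjm S P1 ** E ** cadj (conjm S P1) = E \<and> conjm S P2 ** E ** cadj (conjm S P2) = E)
     \<longleftrightarrow> (P1 ** G = G ** Q1 \<and> P2 ** G = G ** Q2)"
    unfolding conj_equiv[OF S0] G_def[symmetric] lin_equiv[OF q1] lin_equiv[OF q2] ..
  also have "\<dots> \<longleftrightarrow> (z = x \<and> Im g = 0 \<and> x*(r2-r1) = 2*Re g*Re p \<and> x*(r4-r3) = 2*Re g*Im q)"
    unfolding Gf P1 P2 Q1_def Q2_def by (rule key[OF pn r34])
  also have "\<dots> \<longleftrightarrow> (\<exists>x y::real. G = mat2 (of_real x) (of_real y) (of_real y) (of_real x)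
          \<and> x*(r2-r1) = 2*y*Re p \<and> x*(r4-r3) = 2*y*Im q)"
  proof
    assume h: "z = x \<and> Im g = 0 \<and> x*(r2-r1) = 2*Re g*Re p \<and> x*(r4-r3) = 2*Re g*Im q"
    then have "g = of_real (Re g)" by (simp add: complex_eq_iff)
    then have "G = mat2 (of_real x) (of_real (Re g)) (of_real (Re g)) (of_real x)"
      using Gf h by (metis complex_cnj_complex_of_real)
    then show "\<exists>x y::real. G = mat2 (of_real x) (of_real y) (of_real y) (of_real x)
          \<and> x*(r2-r1) = 2*y*Re p \<and> x*(r4-r3) = 2*y*Im q" using h by blast
  next
    assume "\<exists>x y::real. G = mat2 (of_real x) (of_real y) (of_real y) (of_real x)
          \<and> x*(r2-r1) = 2*y*Re p \<and> x*(r4-r3) = 2*y*Im q"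
    then obtain x' y' where h: "G = mat2 (of_real x') (of_real y') (of_real y') (of_real x')"
      "x'*(r2-r1) = 2*y'*Re p" "x'*(r4-r3) = 2*y'*Im q" by blast
    from h(1) Gf have "x = x' \<and> g = of_real y' \<and> z = x'" by (simp add: mat2_eq_iff)
    then show "z = x \<and> Im g = 0 \<and> x*(r2-r1) = 2*Re g*Re p \<and> x*(r4-r3) = 2*Re g*Im q"
      using h by simp
  qed
  finally show ?thesis unfolding G_def .
qed




lemma ex_su2: fixes h :: real assumes "\<bar>h\<bar> > 1"
  shows "\<exists>a b. a\<^sup>2 - b\<^sup>2 = 1 \<and> a\<^sup>2 + b\<^sup>2 = h * (2*a*b)"
proof -
  obtain t where t: "t\<^sup>2 - 2*h*t + 1 = 0" "t\<^sup>2 < 1"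
  proof (cases "h > 1")
    case True
    define t where "t = h - sqrt (h\<^sup>2 - 1)"
    have "1 \<le> h\<^sup>2" using True mult_mono[of 1 h 1 h] by (simp add: power2_eq_square)
    then have s: "(sqrt (h\<^sup>2 - 1))\<^sup>2 = h\<^sup>2 - 1" by (metis real_sqrt_pow2 diff_ge_0_iff_ge)
    have lt: "h - 1 < sqrt (h\<^sup>2 - 1)"
      using True by (intro real_less_rsqrt) (simp add: power2_eq_square algebra_simps)
    have lt2: "sqrt (h\<^sup>2 - 1) < h" using True by (intro real_sqrt_less_iff[THEN iffD2] | simp add: real_less_lsqrt)+
    show ?thesis apply (rule that[of t])
      using s unfolding t_def apply (simp add: power2_eq_square algebra_simps)
      using lt lt2 unfolding t_def by (simp add: abs_square_less_1)
  next
    case False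
    then have hn: "h < -1" using assms by auto
    define t where "t = h + sqrt (h\<^sup>2 - 1)"
    have "1 \<le> (-h)\<^sup>2" using hn mult_mono[of 1 "-h" 1 "-h"] by (simp add: power2_eq_square)
    then have "1 \<le> h\<^sup>2" by simp
    then have s: "(sqrt (h\<^sup>2 - 1))\<^sup>2 = h\<^sup>2 - 1" by (metis real_sqrt_pow2 diff_ge_0_iff_ge)
    have lt: "- h - 1 < sqrt (h\<^sup>2 - 1)"
      using hn by (intro real_less_rsqrt) (simp add: power2_eq_square algebra_simps)
    have lt2: "sqrt (h\<^sup>2 - 1) < -h" using hn by (simp add: real_sqrt_less_iff real_less_lsqrt)
    show ?thesis apply (rule that[of t])
      using s unfolding t_def apply (simp add: power2_eq_square algebra_simps)
      using lt lt2 unfolding t_def by (simp add: abs_square_less_1)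
  qed
  define a where "a = 1 / sqrt (1 - t\<^sup>2)"
  define b where "b = t * a"
  have pos: "1 - t\<^sup>2 > 0" using t by simp
  have a2: "a\<^sup>2 = 1 / (1 - t\<^sup>2)" unfolding a_def using pos by (simp add: power_divide)
  have "a\<^sup>2 - b\<^sup>2 = a\<^sup>2 * (1 - t\<^sup>2)" unfolding b_def by (simp add: power_mult_distrib algebra_simps)
  also have "\<dots> = 1" using a2 pos by simp
  finally have 1: "a\<^sup>2 - b\<^sup>2 = 1" .
  have "a\<^sup>2 + b\<^sup>2 = a\<^sup>2 * (1 + t\<^sup>2)" unfolding b_def by (simp add: power_mult_distrib algebra_simps)
  also have "1 + t\<^sup>2 = 2*h*t" using t(1) by simp
  finally have 2: "a\<^sup>2 + b\<^sup>2 = h * (2*a*b)" unfolding b_def by (simp add: power2_eq_square algebra_simps)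
  show ?thesis using 1 2 by blast
qed

lemma ex_su11: fixes h :: real assumes "\<bar>h\<bar> < 1"
  shows "\<exists>a b. - 2*a*b = 1 \<and> a\<^sup>2 - b\<^sup>2 = h * (a\<^sup>2 + b\<^sup>2)"
proof -
  define w where "w = sqrt ((1+h)/(1-h)) / 2"
  have q: "(1+h)/(1-h) > 0" using assms by (simp add: abs_less_iff)
  have w0: "w > 0" unfolding w_def using q by simp
  have hh: "4 - h*4 \<noteq> 0" "1 - h \<noteq> 0" using assms by (auto simp: abs_less_iff)
  have "w\<^sup>2 = ((1+h)/(1-h)) / 4" unfolding w_def using q by (simp add: power_divide)
  then have w2: "4 * w\<^sup>2 * (1-h) = 1+h" using hh(2) by (simp add: field_simps)
  define a where "a = sqrt w"
  define b where "b = - 1 / (2*a)"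
  have a0: "a > 0" unfolding a_def using w0 by simp
  have a2: "a\<^sup>2 = w" unfolding a_def using w0 by simp
  have 1: "- 2*a*b = 1" unfolding b_def using a0 by simp
  have b2: "b\<^sup>2 = 1 / (4*w)" unfolding b_def using a2 by (simp add: power_divide power_mult_distrib)
  have "a\<^sup>2 - b\<^sup>2 = h * (a\<^sup>2 + b\<^sup>2)" unfolding a2 b2 using w0 w2
    by (simp add: field_simps power2_eq_square)
  then show ?thesis using 1 by blast
qed




lemma realA: fixes x y a b r1 r2 r3 r4 :: real
  assumes "x\<^sup>2 - y\<^sup>2 \<noteq> 0" "x*(r2-r1) = 2*y*a" "x*(r4-r3) = 2*y*b" "r1\<noteq>r2" "r3\<noteq>r4"
  shows "y \<noteq> 0" "2*a/(r2-r1) = x/y" "2*b/(r4-r3) = x/y"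
proof -
  show y: "y \<noteq> 0"
  proof
    assume "y = 0"
    then have "x = 0" using assms(2,4) by simp
    then show False using assms(1) \<open>y = 0\<close> by simp
  qed
  show "2*a/(r2-r1) = x/y" using assms(2,4) y by (simp add: field_simps)
  show "2*b/(r4-r3) = x/y" using assms(3,5) y by (simp add: field_simps)
qed

lemma abs_div_gt: fixes x y :: real assumes "y \<noteq> 0"
  shows "(\<bar>x/y\<bar> > 1 \<longleftrightarrow> x\<^sup>2 > y\<^sup>2)" "(\<bar>x/y\<bar> < 1 \<longleftrightarrow> x\<^sup>2 < y\<^sup>2)"
proof -
  have a: "\<bar>x/y\<bar> = \<bar>x\<bar>/\<bar>y\<bar>" by (simp add: abs_divide)
  have p: "\<bar>y\<bar> > 0" using assms by simp
  show "(\<bar>x/y\<bar> > 1 \<longleftrightarrow> x\<^sup>2 > y\<^sup>2)" unfolding a using p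
    by (simp add: less_divide_eq_1 abs_le_square_iff[symmetric] not_le[symmetric])
  show "(\<bar>x/y\<bar> < 1 \<longleftrightarrow> x\<^sup>2 < y\<^sup>2)" unfolding a using p
    by (simp add: divide_less_eq_1 abs_le_square_iff[symmetric] not_le[symmetric])
qed

lemma su2_iff:
  fixes r1 r2 r3 r4 :: real and p q :: complex
  assumes S: "det S = 1"
    and P1: "P1 = mat2 (of_real r1) p (- cnj p) (of_real r2)"
    and P2: "P2 = mat2 q (\<i> * of_real r3) (\<i> * of_real r4) (cnj q)"
    and d1: "det P1 = 1" and d2: "det P2 = 1"
    and pn: "p \<noteq> 0" and r34: "r3 \<noteq> r4"
  shows "(conjm S P1 \<in> SU2 \<and> conjm S P2 \<in> SU2)
    \<longleftrightarrow> (\<exists>x y::real. S ** cadj S = mat2 (of_real x) (of_real y) (of_real y) (of_real x)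
          \<and> x*(r2-r1) = 2*y*Re p \<and> x*(r4-r3) = 2*y*Im q)"
proof -
  have S0: "det S \<noteq> 0" using S by simp
  have "(conjm S P1 \<in> SU2 \<and> conjm S P2 \<in> SU2) \<longleftrightarrow>
    (conjm S P1 ** mat 1 ** cadj (conjm S P1) = mat 1 \<and> conjm S P2 ** mat 1 ** cadj (conjm S P2) = mat 1)"
    unfolding SU2_def SL2_def using det_conjm[OF S0] d1 d2 by simp
  then show ?thesis
    using reduce[OF S cadj_one P1 P2 d1 d2 pn r34] by simp
qed

lemma su11_iff:
  fixes r1 r2 r3 r4 :: real and p q :: complex
  assumes S: "det S = 1"
    and P1: "P1 = mat2 (of_real r1) p (- cnj p) (of_real r2)"
    and P2: "P2 = mat2 q (\<i> * of_real r3) (\<i> * of_real r4) (cnj q)"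
    and d1: "det P1 = 1" and d2: "det P2 = 1"
    and pn: "p \<noteq> 0" and r34: "r3 \<noteq> r4"
  shows "(conjm S P1 \<in> SU11 \<and> conjm S P2 \<in> SU11)
    \<longleftrightarrow> (\<exists>x y::real. S ** e3 ** cadj S = mat2 (of_real x) (of_real y) (of_real y) (of_real x)
          \<and> x*(r2-r1) = 2*y*Re p \<and> x*(r4-r3) = 2*y*Im q)"
proof -
  have S0: "det S \<noteq> 0" using S by simp
  have "(conjm S P1 \<in> SU11 \<and> conjm S P2 \<in> SU11) \<longleftrightarrow>
    (conjm S P1 ** e3 ** cadj (conjm S P1) = e3 \<and> conjm S P2 ** e3 ** cadj (conjm S P2) = e3)"
    unfolding SU11_def SL2_def using det_conjm[OF S0] d1 d2 by simp
  then show ?thesis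
    using reduce[OF S e3_cadj P1 P2 d1 d2 pn r34] by simp
qed

lemma S2_facts: fixes a b :: real shows
  "det (mat2 (of_real a) (of_real b) (of_real b) (of_real a)) = of_real (a\<^sup>2 - b\<^sup>2)"
  "mat2 (of_real a) (of_real b) (of_real b) (of_real a) ** cadj (mat2 (of_real a) (of_real b) (of_real b) (of_real a))
    = mat2 (of_real (a\<^sup>2+b\<^sup>2)) (of_real (2*a*b)) (of_real (2*a*b)) (of_real (a\<^sup>2+b\<^sup>2))"
  by (simp_all add: mat2_det mat2_cadj mat2_mult power2_eq_square mat2_eq_iff)

lemma S11_facts: fixes a b :: real shows
  "det (mat2 (of_real a) (of_real b) (of_real a) (- of_real b)) = of_real (- 2*a*b)"
  "mat2 (of_real a) (of_real b) (of_real a) (- of_real b) ** e3 ** cadj (mat2 (of_real a) (of_real b) (of_real a) (- of_real b))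
    = mat2 (of_real (a\<^sup>2-b\<^sup>2)) (of_real (a\<^sup>2+b\<^sup>2)) (of_real (a\<^sup>2+b\<^sup>2)) (of_real (a\<^sup>2-b\<^sup>2))"
  by (simp_all add: mat2_det mat2_cadj mat2_mult power2_eq_square mat2_eq_iff e3_def)

lemma of_real_mat2_eq: "mat2 (of_real x) (of_real y) (of_real y) (of_real x) = mat2 (of_real x') (of_real y') (of_real y') (of_real x') \<longleftrightarrow> x = x' \<and> y = y'"
  by (auto simp add: mat2_eq_iff)

lemma det_SES: assumes "det (S::complex^2^2) = 1" shows "det (S ** E ** cadj S) = det E"
  using assms by (simp add: det_mul det_cadj)




lemma det_S2: fixes a b :: real assumes "a\<^sup>2 - b\<^sup>2 = 1"
  shows "det (mat2 (of_real a) (of_real b) (of_real b) (of_real a)) = 1"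
    "mat2 (of_real a) (of_real b) (of_real b) (of_real a) \<in> SL2"
proof -
  show d: "det (mat2 (of_real a) (of_real b) (of_real b) (of_real a)) = 1"
    by (simp only: S2_facts(1) assms of_real_1)
  show "mat2 (of_real a) (of_real b) (of_real b) (of_real a) \<in> SL2"
    using d by (simp add: SL2_def)
qed

lemma det_S11: fixes a b :: real assumes "- 2 * a * b = 1"
  shows "det (mat2 (of_real a) (of_real b) (of_real a) (- of_real b)) = 1"
    "mat2 (of_real a) (of_real b) (of_real a) (- of_real b) \<in> SL2"
proof -
  show d: "det (mat2 (of_real a) (of_real b) (of_real a) (- of_real b)) = 1"
    by (simp only: S11_facts(1) assms of_real_1)
  show "mat2 (of_real a) (of_real b) (of_real a) (- of_real b) \<in> SL2"
    using d by (simp add: SL2_def)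
qed

lemma main_b:
  fixes r1 r2 r3 r4 h1 h2 :: real and p q :: complex
  assumes P1: "P1 = mat2 (of_real r1) p (- cnj p) (of_real r2)"
    and P2: "P2 = mat2 q (\<i> * of_real r3) (\<i> * of_real r4) (cnj q)"
    and d1: "det P1 = 1" and d2: "det P2 = 1"
    and pn: "p \<noteq> 0" and r12: "r1 \<noteq> r2" and r34: "r3 \<noteq> r4"
    and h1: "h1 = 2 * Re p / (r2 - r1)" and h2: "h2 = 2 * Im q / (r4 - r3)"
  shows
          "((\<exists>\<alpha> \<beta> :: real. \<alpha>\<^sup>2 - \<beta>\<^sup>2 = 1 \<and>
              conjm (mat2 (of_real \<alpha>) (of_real \<beta>) (of_real \<beta>) (of_real \<alpha>)) P1 \<in> SU2 \<and>
              conjm (mat2 (of_real \<alpha>) (of_real \<beta>) (of_real \<beta>) (of_real \<alpha>)) P2 \<in> SU2)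
            \<longleftrightarrow> (h1 = h2 \<and> \<bar>h1\<bar> > 1))
          \<and>
          (\<forall>\<alpha> \<beta> :: real. \<alpha>\<^sup>2 - \<beta>\<^sup>2 = 1 \<and>
              conjm (mat2 (of_real \<alpha>) (of_real \<beta>) (of_real \<beta>) (of_real \<alpha>)) P1 \<in> SU2 \<and>
              conjm (mat2 (of_real \<alpha>) (of_real \<beta>) (of_real \<beta>) (of_real \<alpha>)) P2 \<in> SU2
            \<longrightarrow> (\<alpha>\<^sup>2 + \<beta>\<^sup>2) / (2 * \<alpha> * \<beta>) = h1)
          \<and>
          ((\<exists>\<alpha> \<beta> :: real. - 2 * \<alpha> * \<beta> = 1 \<and>
              conjm (mat2 (of_real \<alpha>) (of_real \<beta>) (of_real \<alpha>) (- of_real \<beta>)) P1 \<in> SU11 \<and>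
              conjm (mat2 (of_real \<alpha>) (of_real \<beta>) (of_real \<alpha>) (- of_real \<beta>)) P2 \<in> SU11)
            \<longleftrightarrow> (h1 = h2 \<and> \<bar>h1\<bar> < 1))
          \<and>
          (\<forall>\<alpha> \<beta> :: real. - 2 * \<alpha> * \<beta> = 1 \<and>
              conjm (mat2 (of_real \<alpha>) (of_real \<beta>) (of_real \<alpha>) (- of_real \<beta>)) P1 \<in> SU11 \<and>
              conjm (mat2 (of_real \<alpha>) (of_real \<beta>) (of_real \<alpha>) (- of_real \<beta>)) P2 \<in> SU11
            \<longrightarrow> (\<alpha>\<^sup>2 - \<beta>\<^sup>2) / (\<alpha>\<^sup>2 + \<beta>\<^sup>2) = h1)
          \<and>
          ((\<exists>S \<in> SL2. conjm S P1 \<in> SU2 \<and> conjm S P2 \<in> SU2) \<longleftrightarrow> (h1 = h2 \<and> \<bar>h1\<bar> > 1))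
          \<and>
          ((\<exists>S \<in> SL2. conjm S P1 \<in> SU11 \<and> conjm S P2 \<in> SU11) \<longleftrightarrow> (h1 = h2 \<and> \<bar>h1\<bar> < 1))"
proof -
  note su2 = su2_iff[OF _ P1 P2 d1 d2 pn r34]
  note su11 = su11_iff[OF _ P1 P2 d1 d2 pn r34]
  have gen2: "h1 = h2 \<and> \<bar>h1\<bar> > 1" if S: "S \<in> SL2" "conjm S P1 \<in> SU2" "conjm S P2 \<in> SU2" for S
  proof -
    have dS: "det S = 1" using S(1) by (simp add: SL2_def)
    obtain x y where xy: "S ** cadj S = mat2 (of_real x) (of_real y) (of_real y) (of_real x)"
      "x*(r2-r1) = 2*y*Re p" "x*(r4-r3) = 2*y*Im q" using su2[OF dS] S by blast
    have "det (S ** mat 1 ** cadj S) = 1" using det_SES[OF dS, of "mat 1"] by simp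
    then have "of_real (x*x - y*y) = (1::complex)" using xy(1) by (simp add: mat2_det)
    then have d: "x\<^sup>2 - y\<^sup>2 = 1" unfolding of_real_eq_1_iff by (simp add: power2_eq_square)
    note R = realA[of x y, OF _ xy(2) xy(3) r12 r34]
    show ?thesis using R d abs_div_gt(1)[of y x] h1 h2 by simp
  qed
  have gen11: "h1 = h2 \<and> \<bar>h1\<bar> < 1" if S: "S \<in> SL2" "conjm S P1 \<in> SU11" "conjm S P2 \<in> SU11" for S
  proof -
    have dS: "det S = 1" using S(1) by (simp add: SL2_def)
    obtain x y where xy: "S ** e3 ** cadj S = mat2 (of_real x) (of_real y) (of_real y) (of_real x)"
      "x*(r2-r1) = 2*y*Re p" "x*(r4-r3) = 2*y*Im q" using su11[OF dS] S by blast
    have "det (S ** e3 ** cadj S) = -1" using det_SES[OF dS, of e3] by (simp add: e3_def mat2_det)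
    then have "of_real (x*x - y*y) = (-1::complex)" using xy(1) by (simp add: mat2_det)
    then have "x*x - y*y = -1" by (metis of_real_1 of_real_eq_iff of_real_minus)
    then have d: "x\<^sup>2 - y\<^sup>2 = -1" by (simp add: power2_eq_square)
    note R = realA[of x y, OF _ xy(2) xy(3) r12 r34]
    show ?thesis using R d abs_div_gt(2)[of y x] h1 h2 by simp
  qed
  have spec2: "\<exists>\<alpha> \<beta> :: real. \<alpha>\<^sup>2 - \<beta>\<^sup>2 = 1 \<and>
              conjm (mat2 (of_real \<alpha>) (of_real \<beta>) (of_real \<beta>) (of_real \<alpha>)) P1 \<in> SU2 \<and>
              conjm (mat2 (of_real \<alpha>) (of_real \<beta>) (of_real \<beta>) (of_real \<alpha>)) P2 \<in> SU2"
    if H: "h1 = h2" "\<bar>h1\<bar> > 1"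
  proof -
    obtain a b where ab: "a\<^sup>2 - b\<^sup>2 = 1" "a\<^sup>2 + b\<^sup>2 = h1 * (2*a*b)" using ex_su2[OF H(2)] by blast
    have dS: "det (mat2 (of_real a) (of_real b) (of_real b) (of_real a)) = 1"
      using det_S2 ab(1) by blast
    have e1: "h1 * (r2 - r1) = 2 * Re p" using h1 r12 by simp
    have e2: "h1 * (r4 - r3) = 2 * Im q" using h2 H(1) r34 by simp
    have f1: "(a\<^sup>2+b\<^sup>2)*(r2-r1) = 2*(2*a*b)*Re p" unfolding ab(2) using e1
      by (metis mult.assoc mult.commute)
    have f2: "(a\<^sup>2+b\<^sup>2)*(r4-r3) = 2*(2*a*b)*Im q" unfolding ab(2) using e2
      by (metis mult.assoc mult.commute)
    have "conjm (mat2 (of_real a) (of_real b) (of_real b) (of_real a)) P1 \<in> SU2 \<and>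
              conjm (mat2 (of_real a) (of_real b) (of_real b) (of_real a)) P2 \<in> SU2"
      unfolding su2[OF dS] S2_facts(2)
      by (intro exI[of _ "a\<^sup>2+b\<^sup>2"] exI[of _ "2*a*b"] conjI refl f1 f2)
    then show ?thesis using ab(1) by blast
  qed
  have spec11: "\<exists>\<alpha> \<beta> :: real. - 2 * \<alpha> * \<beta> = 1 \<and>
              conjm (mat2 (of_real \<alpha>) (of_real \<beta>) (of_real \<alpha>) (- of_real \<beta>)) P1 \<in> SU11 \<and>
              conjm (mat2 (of_real \<alpha>) (of_real \<beta>) (of_real \<alpha>) (- of_real \<beta>)) P2 \<in> SU11"
    if H: "h1 = h2" "\<bar>h1\<bar> < 1"
  proof -
    obtain a b where ab: "- 2*a*b = 1" "a\<^sup>2 - b\<^sup>2 = h1 * (a\<^sup>2 + b\<^sup>2)" using ex_su11[OF H(2)] by blast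
    have dS: "det (mat2 (of_real a) (of_real b) (of_real a) (- of_real b)) = 1"
      using det_S11 ab(1) by blast
    have e1: "h1 * (r2 - r1) = 2 * Re p" using h1 r12 by simp
    have e2: "h1 * (r4 - r3) = 2 * Im q" using h2 H(1) r34 by simp
    have f1: "(a\<^sup>2-b\<^sup>2)*(r2-r1) = 2*(a\<^sup>2+b\<^sup>2)*Re p" unfolding ab(2) using e1
      by (metis mult.assoc mult.commute)
    have f2: "(a\<^sup>2-b\<^sup>2)*(r4-r3) = 2*(a\<^sup>2+b\<^sup>2)*Im q" unfolding ab(2) using e2
      by (metis mult.assoc mult.commute)
    have "conjm (mat2 (of_real a) (of_real b) (of_real a) (- of_real b)) P1 \<in> SU11 \<and>
              conjm (mat2 (of_real a) (of_real b) (of_real a) (- of_real b)) P2 \<in> SU11"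
      unfolding su11[OF dS] S11_facts(2)
      by (intro exI[of _ "a\<^sup>2-b\<^sup>2"] exI[of _ "a\<^sup>2+b\<^sup>2"] conjI refl f1 f2)
    then show ?thesis using ab(1) by blast
  qed
  have c1: "((\<exists>\<alpha> \<beta> :: real. \<alpha>\<^sup>2 - \<beta>\<^sup>2 = 1 \<and>
              conjm (mat2 (of_real \<alpha>) (of_real \<beta>) (of_real \<beta>) (of_real \<alpha>)) P1 \<in> SU2 \<and>
              conjm (mat2 (of_real \<alpha>) (of_real \<beta>) (of_real \<beta>) (of_real \<alpha>)) P2 \<in> SU2)
            \<longleftrightarrow> (h1 = h2 \<and> \<bar>h1\<bar> > 1))"
  proof
    assume "\<exists>\<alpha> \<beta> :: real. \<alpha>\<^sup>2 - \<beta>\<^sup>2 = 1 \<and>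
              conjm (mat2 (of_real \<alpha>) (of_real \<beta>) (of_real \<beta>) (of_real \<alpha>)) P1 \<in> SU2 \<and>
              conjm (mat2 (of_real \<alpha>) (of_real \<beta>) (of_real \<beta>) (of_real \<alpha>)) P2 \<in> SU2"
    then obtain a b where ab: "a\<^sup>2 - b\<^sup>2 = 1"
      "conjm (mat2 (of_real a) (of_real b) (of_real b) (of_real a)) P1 \<in> SU2"
      "conjm (mat2 (of_real a) (of_real b) (of_real b) (of_real a)) P2 \<in> SU2" by blast
    have "mat2 (of_real a) (of_real b) (of_real b) (of_real a) \<in> SL2"
      using det_S2 ab(1) by blast
    then show "h1 = h2 \<and> \<bar>h1\<bar> > 1" using gen2 ab by blast
  next
    assume "h1 = h2 \<and> \<bar>h1\<bar> > 1"
    then show "\<exists>\<alpha> \<beta> :: real. \<alpha>\<^sup>2 - \<beta>\<^sup>2 = 1 \<and>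
              conjm (mat2 (of_real \<alpha>) (of_real \<beta>) (of_real \<beta>) (of_real \<alpha>)) P1 \<in> SU2 \<and>
              conjm (mat2 (of_real \<alpha>) (of_real \<beta>) (of_real \<beta>) (of_real \<alpha>)) P2 \<in> SU2"
      using spec2 by blast
  qed
  have c3: "((\<exists>\<alpha> \<beta> :: real. - 2 * \<alpha> * \<beta> = 1 \<and>
              conjm (mat2 (of_real \<alpha>) (of_real \<beta>) (of_real \<alpha>) (- of_real \<beta>)) P1 \<in> SU11 \<and>
              conjm (mat2 (of_real \<alpha>) (of_real \<beta>) (of_real \<alpha>) (- of_real \<beta>)) P2 \<in> SU11)
            \<longleftrightarrow> (h1 = h2 \<and> \<bar>h1\<bar> < 1))"
  proof
    assume "\<exists>\<alpha> \<beta> :: real. - 2 * \<alpha> * \<beta> = 1 \<and>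
              conjm (mat2 (of_real \<alpha>) (of_real \<beta>) (of_real \<alpha>) (- of_real \<beta>)) P1 \<in> SU11 \<and>
              conjm (mat2 (of_real \<alpha>) (of_real \<beta>) (of_real \<alpha>) (- of_real \<beta>)) P2 \<in> SU11"
    then obtain a b where ab: "- 2 * a * b = 1"
      "conjm (mat2 (of_real a) (of_real b) (of_real a) (- of_real b)) P1 \<in> SU11"
      "conjm (mat2 (of_real a) (of_real b) (of_real a) (- of_real b)) P2 \<in> SU11" by blast
    have "mat2 (of_real a) (of_real b) (of_real a) (- of_real b) \<in> SL2"
      using det_S11 ab(1) by blast
    then show "h1 = h2 \<and> \<bar>h1\<bar> < 1" using gen11 ab by blast
  next
    assume "h1 = h2 \<and> \<bar>h1\<bar> < 1"
    then show "\<exists>\<alpha> \<beta> :: real. - 2 * \<alpha> * \<beta> = 1 \<and>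
              conjm (mat2 (of_real \<alpha>) (of_real \<beta>) (of_real \<alpha>) (- of_real \<beta>)) P1 \<in> SU11 \<and>
              conjm (mat2 (of_real \<alpha>) (of_real \<beta>) (of_real \<alpha>) (- of_real \<beta>)) P2 \<in> SU11"
      using spec11 by blast
  qed
  have c2: "\<forall>\<alpha> \<beta> :: real. \<alpha>\<^sup>2 - \<beta>\<^sup>2 = 1 \<and>
              conjm (mat2 (of_real \<alpha>) (of_real \<beta>) (of_real \<beta>) (of_real \<alpha>)) P1 \<in> SU2 \<and>
              conjm (mat2 (of_real \<alpha>) (of_real \<beta>) (of_real \<beta>) (of_real \<alpha>)) P2 \<in> SU2
            \<longrightarrow> (\<alpha>\<^sup>2 + \<beta>\<^sup>2) / (2 * \<alpha> * \<beta>) = h1"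
  proof (intro allI impI)
    fix a b :: real
    assume ab: "a\<^sup>2 - b\<^sup>2 = 1 \<and>
              conjm (mat2 (of_real a) (of_real b) (of_real b) (of_real a)) P1 \<in> SU2 \<and>
              conjm (mat2 (of_real a) (of_real b) (of_real b) (of_real a)) P2 \<in> SU2"
    have dS: "det (mat2 (of_real a) (of_real b) (of_real b) (of_real a)) = 1"
      using det_S2 ab by blast
    obtain x y where xy: "mat2 (of_real a) (of_real b) (of_real b) (of_real a) ** cadj (mat2 (of_real a) (of_real b) (of_real b) (of_real a)) = mat2 (of_real x) (of_real y) (of_real y) (of_real x)"
      "x*(r2-r1) = 2*y*Re p" "x*(r4-r3) = 2*y*Im q" using su2[OF dS] ab by blast
    have "x = a\<^sup>2+b\<^sup>2 \<and> y = 2*a*b" using xy(1) unfolding S2_facts(2) of_real_mat2_eq by simp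
    moreover have "(a\<^sup>2+b\<^sup>2)\<^sup>2 - (2*a*b)\<^sup>2 = (a\<^sup>2 - b\<^sup>2)\<^sup>2" by (simp add: power2_eq_square algebra_simps)
    ultimately have "x\<^sup>2 - y\<^sup>2 \<noteq> 0" using ab by simp
    then show "(a\<^sup>2 + b\<^sup>2) / (2 * a * b) = h1"
      using realA(2)[OF _ xy(2) xy(3) r12 r34] h1 \<open>x = a\<^sup>2+b\<^sup>2 \<and> y = 2*a*b\<close> by simp
  qed
  have c4: "\<forall>\<alpha> \<beta> :: real. - 2 * \<alpha> * \<beta> = 1 \<and>
              conjm (mat2 (of_real \<alpha>) (of_real \<beta>) (of_real \<alpha>) (- of_real \<beta>)) P1 \<in> SU11 \<and>
              conjm (mat2 (of_real \<alpha>) (of_real \<beta>) (of_real \<alpha>) (- of_real \<beta>)) P2 \<in> SU11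
            \<longrightarrow> (\<alpha>\<^sup>2 - \<beta>\<^sup>2) / (\<alpha>\<^sup>2 + \<beta>\<^sup>2) = h1"
  proof (intro allI impI)
    fix a b :: real
    assume ab: "- 2 * a * b = 1 \<and>
              conjm (mat2 (of_real a) (of_real b) (of_real a) (- of_real b)) P1 \<in> SU11 \<and>
              conjm (mat2 (of_real a) (of_real b) (of_real a) (- of_real b)) P2 \<in> SU11"
    have dS: "det (mat2 (of_real a) (of_real b) (of_real a) (- of_real b)) = 1"
      using det_S11 ab by blast
    obtain x y where xy: "mat2 (of_real a) (of_real b) (of_real a) (- of_real b) ** e3 ** cadj (mat2 (of_real a) (of_real b) (of_real a) (- of_real b)) = mat2 (of_real x) (of_real y) (of_real y) (of_real x)"
      "x*(r2-r1) = 2*y*Re p" "x*(r4-r3) = 2*y*Im q" using su11[OF dS] ab by blast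
    have xe: "x = a\<^sup>2-b\<^sup>2 \<and> y = a\<^sup>2+b\<^sup>2" using xy(1) unfolding S11_facts(2) of_real_mat2_eq by simp
    moreover have "(a\<^sup>2-b\<^sup>2)\<^sup>2 - (a\<^sup>2+b\<^sup>2)\<^sup>2 = - (2*a*b)\<^sup>2" by (simp add: power2_eq_square algebra_simps)
    ultimately have "x\<^sup>2 - y\<^sup>2 \<noteq> 0" using ab by simp
    then show "(a\<^sup>2 - b\<^sup>2) / (a\<^sup>2 + b\<^sup>2) = h1"
      using realA(2)[OF _ xy(2) xy(3) r12 r34] h1 xe by simp
  qed
  have c5: "(\<exists>S \<in> SL2. conjm S P1 \<in> SU2 \<and> conjm S P2 \<in> SU2) \<longleftrightarrow> (h1 = h2 \<and> \<bar>h1\<bar> > 1)"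
  proof
    assume "\<exists>S \<in> SL2. conjm S P1 \<in> SU2 \<and> conjm S P2 \<in> SU2"
    then show "h1 = h2 \<and> \<bar>h1\<bar> > 1" using gen2 by blast
  next
    assume "h1 = h2 \<and> \<bar>h1\<bar> > 1"
    then obtain a b where ab: "a\<^sup>2 - b\<^sup>2 = 1"
      "conjm (mat2 (of_real a) (of_real b) (of_real b) (of_real a)) P1 \<in> SU2"
      "conjm (mat2 (of_real a) (of_real b) (of_real b) (of_real a)) P2 \<in> SU2" using spec2 by blast
    have "mat2 (of_real a) (of_real b) (of_real b) (of_real a) \<in> SL2"
      using det_S2 ab(1) by blast
    then show "\<exists>S \<in> SL2. conjm S P1 \<in> SU2 \<and> conjm S P2 \<in> SU2" using ab by blast
  qed
  have c6: "(\<exists>S \<in> SL2. conjm S P1 \<in> SU11 \<and> conjm S P2 \<in> SU11) \<longleftrightarrow> (h1 = h2 \<and> \<bar>h1\<bar> < 1)"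
  proof
    assume "\<exists>S \<in> SL2. conjm S P1 \<in> SU11 \<and> conjm S P2 \<in> SU11"
    then show "h1 = h2 \<and> \<bar>h1\<bar> < 1" using gen11 by blast
  next
    assume "h1 = h2 \<and> \<bar>h1\<bar> < 1"
    then obtain a b where ab: "- 2 * a * b = 1"
      "conjm (mat2 (of_real a) (of_real b) (of_real a) (- of_real b)) P1 \<in> SU11"
      "conjm (mat2 (of_real a) (of_real b) (of_real a) (- of_real b)) P2 \<in> SU11" using spec11 by blast
    have "mat2 (of_real a) (of_real b) (of_real a) (- of_real b) \<in> SL2"
      using det_S11 ab(1) by blast
    then show "\<exists>S \<in> SL2. conjm S P1 \<in> SU11 \<and> conjm S P2 \<in> SU11" using ab by blast
  qed
  show ?thesis using c1 c2 c3 c4 c5 c6 by blast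
qed




theorem mainTheorem3:
  fixes k :: nat and A1 B1 C1 D1 A2 B2 C2 D2 :: complex
  assumes "k \<ge> 1"
    and "A1 * D1 - B1 * C1 = 1"
    and "A2 * D2 - B2 * C2 = 1"
  shows
    "(\<exists>(p::complex) (q::complex) (r1::real) (r2::real) (r3::real) (r4::real).
        Phi1 k A1 B1 C1 D1 = mat2 (of_real r1) p (- cnj p) (of_real r2) \<and>
        Phi2 A2 B2 C2 D2 = mat2 q (\<i> * of_real r3) (\<i> * of_real r4) (cnj q))
     \<and>
     (\<forall>(p::complex) (q::complex) (r1::real) (r2::real) (r3::real) (r4::real).
        Phi1 k A1 B1 C1 D1 = mat2 (of_real r1) p (- cnj p) (of_real r2) \<and>
        Phi2 A2 B2 C2 D2 = mat2 q (\<i> * of_real r3) (\<i> * of_real r4) (cnj q) \<and>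
        p \<noteq> 0 \<and> q \<noteq> 0 \<and> r1 \<noteq> r2 \<and> r3 \<noteq> r4 \<longrightarrow>
        (let h1 = 2 * Re p / (r2 - r1); h2 = 2 * Im q / (r4 - r3);
             P1 = Phi1 k A1 B1 C1 D1; P2 = Phi2 A2 B2 C2 D2 in
          ((\<exists>\<alpha> \<beta> :: real. \<alpha>\<^sup>2 - \<beta>\<^sup>2 = 1 \<and>
              conjm (mat2 (of_real \<alpha>) (of_real \<beta>) (of_real \<beta>) (of_real \<alpha>)) P1 \<in> SU2 \<and>
              conjm (mat2 (of_real \<alpha>) (of_real \<beta>) (of_real \<beta>) (of_real \<alpha>)) P2 \<in> SU2)
            \<longleftrightarrow> (h1 = h2 \<and> \<bar>h1\<bar> > 1))
          \<and>
          (\<forall>\<alpha> \<beta> :: real. \<alpha>\<^sup>2 - \<beta>\<^sup>2 = 1 \<and>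
              conjm (mat2 (of_real \<alpha>) (of_real \<beta>) (of_real \<beta>) (of_real \<alpha>)) P1 \<in> SU2 \<and>
              conjm (mat2 (of_real \<alpha>) (of_real \<beta>) (of_real \<beta>) (of_real \<alpha>)) P2 \<in> SU2
            \<longrightarrow> (\<alpha>\<^sup>2 + \<beta>\<^sup>2) / (2 * \<alpha> * \<beta>) = h1)
          \<and>
          ((\<exists>\<alpha> \<beta> :: real. - 2 * \<alpha> * \<beta> = 1 \<and>
              conjm (mat2 (of_real \<alpha>) (of_real \<beta>) (of_real \<alpha>) (- of_real \<beta>)) P1 \<in> SU11 \<and>
              conjm (mat2 (of_real \<alpha>) (of_real \<beta>) (of_real \<alpha>) (- of_real \<beta>)) P2 \<in> SU11)
            \<longleftrightarrow> (h1 = h2 \<and> \<bar>h1\<bar> < 1))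
          \<and>
          (\<forall>\<alpha> \<beta> :: real. - 2 * \<alpha> * \<beta> = 1 \<and>
              conjm (mat2 (of_real \<alpha>) (of_real \<beta>) (of_real \<alpha>) (- of_real \<beta>)) P1 \<in> SU11 \<and>
              conjm (mat2 (of_real \<alpha>) (of_real \<beta>) (of_real \<alpha>) (- of_real \<beta>)) P2 \<in> SU11
            \<longrightarrow> (\<alpha>\<^sup>2 - \<beta>\<^sup>2) / (\<alpha>\<^sup>2 + \<beta>\<^sup>2) = h1)
          \<and>
          ((\<exists>S \<in> SL2. conjm S P1 \<in> SU2 \<and> conjm S P2 \<in> SU2) \<longleftrightarrow> (h1 = h2 \<and> \<bar>h1\<bar> > 1))
          \<and>
          ((\<exists>S \<in> SL2. conjm S P1 \<in> SU11 \<and> conjm S P2 \<in> SU11) \<longleftrightarrow> (h1 = h2 \<and> \<bar>h1\<bar> < 1))))"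
proof -
  have a: "\<exists>(p::complex) (q::complex) (r1::real) (r2::real) (r3::real) (r4::real).
        Phi1 k A1 B1 C1 D1 = mat2 (of_real r1) p (- cnj p) (of_real r2) \<and>
        Phi2 A2 B2 C2 D2 = mat2 q (\<i> * of_real r3) (\<i> * of_real r4) (cnj q)"
    using Phi1_form[of k A1 B1 C1 D1] Phi2_form[of A2 B2 C2 D2] by blast
  have d1: "det (Phi1 k A1 B1 C1 D1) = 1" using det_Phi1 assms(2) by blast
  have d2: "det (Phi2 A2 B2 C2 D2) = 1" using det_Phi2 assms(3) by blast
  show ?thesis
    apply (rule conjI[OF a])
    apply (intro allI impI)
    apply (unfold Let_def)
    apply (rule main_b[OF _ _ d1 d2])
    apply auto
    done
qed


end
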